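(* Let $f \in \mathbb{Z}[x]$ be a polynomial with $f(\mathbb{N}) \subseteq \mathbb{N}$. Then the following two conditions are equivalent: (i) For every prime number $p$, the reduction map $f_p : \mathbb{Z}/p\mathbb{Z} \to \mathbb{Z}/p\mathbb{Z}$, $x \bmod p \mapsto f(x) \bmod p$, is not a cyclic permutation of length $p$ (i.e. it is not a permutation of $\mathbb{Z}/p\mathbb{Z}$ consisting of a single cycle of length $p$). (ii) For any $a, b \in \mathbb{N}$, if $f{\uparrow}_a{\uparrow}_b(n) \to \infty$ in $\mathbb{R}$ as $n \to \infty$, then for every prime number $p$ the limit $\lim_{n \to \infty} f{\uparrow}_a{\uparrow}_b(n)$ exists in the ring $\mathbb{Z}_p$ of $p$-adic integers, and this limit is independent of $b$.
   Context: $\mathbb{N} = \{1,2,3,\dots\}$ denotes the set of positive integers. For a map $g : X \to X$ and $x \in X$, $g^n$ denotes the $n$-th iterate of $g$ and $g{\uparrow}_x : \mathbb{N} \to X$ is the map $n \mapsto g^n(x)$. For $f$ as in the statement and $a \in \mathbb{N}$, $f{\uparrow}_a : \mathbb{N} \to \mathbb{N}$, $n \mapsto f^n(a)$, and $f{\uparrow}_a{\uparrow}_b = (f{\uparrow}_a){\uparrow}_b$, i.e. $f{\uparrow}_a{\uparrow}_b(n) = (f{\uparrow}_a)^n(b)$; equivalently, this is the sequence $y_n$ with $y_0 = b$ and $y_{n+1} = f^{y_n}(a)$. Positive integers are regarded as elements of $\mathbb{Z}_p$ via the natural embedding. *)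

theory Defs
  imports Complex_Main "HOL-Computational_Algebra.Polynomial" "HOL-Number_Theory.Number_Theory"
begin

text \<open>The map f restricted to positive integers (meaningful when f(N) \<subseteq> N).\<close>
definition fN :: "int poly \<Rightarrow> nat \<Rightarrow> nat" where
  "fN f n = nat (poly f (int n))"

definition up1 :: "int poly \<Rightarrow> nat \<Rightarrow> nat \<Rightarrow> nat" where
  "up1 f a n = (fN f ^^ n) a"

text \<open>f up-arrow a up-arrow b : n \<mapsto> (f up-arrow a)^n(b),
  i.e. y 0 = b, y (n+1) = f^(y n)(a).\<close>
definition up2 :: "int poly \<Rightarrow> nat \<Rightarrow> nat \<Rightarrow> nat \<Rightarrow> nat" where
  "up2 f a b n = (up1 f a ^^ n) b"

definition red_map :: "int poly \<Rightarrow> nat \<Rightarrow> int \<Rightarrow> int" where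
  "red_map f p x = poly f x mod int p"

definition is_full_cycle :: "('a \<Rightarrow> 'a) \<Rightarrow> 'a set \<Rightarrow> bool" where
  "is_full_cycle g S \<longleftrightarrow> bij_betw g S S \<and> (\<forall>x\<in>S. {(g ^^ n) x | n. True} = S)"

text \<open>p-adic integers, represented as compatible systems of residues
  (x k is the residue mod p^k, in {0..<p^k}).\<close>
definition padic_ints :: "nat \<Rightarrow> (nat \<Rightarrow> int) set" where
  "padic_ints p = {x. \<forall>k. 0 \<le> x k \<and> x k < int p ^ k \<and> x (Suc k) mod int p ^ k = x k}"

definition padic_tendsto :: "nat \<Rightarrow> (nat \<Rightarrow> int) \<Rightarrow> (nat \<Rightarrow> int) \<Rightarrow> bool" where
  "padic_tendsto p y x \<longleftrightarrow> x \<in> padic_ints p \<and>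
     (\<forall>k. \<exists>N. \<forall>n\<ge>N. [y n = x k] (mod int p ^ k))"

end

theory Submission
  imports Defs
begin

lemma poly_cong_int:
  fixes f :: "int poly"
  assumes "[x = y] (mod m)"
  shows "[poly f x = poly f y] (mod m)"
proof (induction f)
  case (pCons c h)
  then show ?case using assms by (simp add: cong_add cong_mult)
qed simp

lemma imod: "int x mod int p = int r \<Longrightarrow> x mod p = r"
  by (metis nat_int zmod_int)

lemma imod2: "x mod p = r \<Longrightarrow> int x mod int p = int r"
  by (simp add: zmod_int[symmetric])

definition orb :: "int poly \<Rightarrow> nat \<Rightarrow> nat \<Rightarrow> nat" where
  "orb f a m = (fN f ^^ m) a"

lemma orb_0[simp]: "orb f a 0 = a" by (simp add: orb_def)
lemma orb_Suc: "orb f a (Suc m) = fN f (orb f a m)" by (simp add: orb_def)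

lemma up2_0: "up2 f a b 0 = b" by (simp add: up2_def)
lemma up2_Suc: "up2 f a b (Suc n) = orb f a (up2 f a b n)"
  by (simp add: up2_def up1_def orb_def)

context
  fixes f :: "int poly"
  assumes pos: "\<And>n::nat. n \<ge> 1 \<Longrightarrow> poly f (int n) \<ge> 1"
begin

lemma fN_int: "n \<ge> 1 \<Longrightarrow> int (fN f n) = poly f (int n)"
  using pos[of n] by (simp add: fN_def)

lemma fN_ge1: "n \<ge> 1 \<Longrightarrow> fN f n \<ge> 1"
  using pos[of n] by (simp add: fN_def)

lemma orb_ge1: "a \<ge> 1 \<Longrightarrow> orb f a m \<ge> 1"
proof (induction m)
  case (Suc m) then show ?case using fN_ge1[of "orb f a m"] by (simp add: orb_Suc)
qed simp

lemma fN_cong: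
  assumes "x \<ge> 1" "x' \<ge> 1" "[x = x'] (mod M)"
  shows "[fN f x = fN f x'] (mod M)"
proof -
  have "[int x = int x'] (mod int M)" using assms(3) by (simp add: cong_int_iff)
  then have "[poly f (int x) = poly f (int x')] (mod int M)" by (rule poly_cong_int)
  then have "[int (fN f x) = int (fN f x')] (mod int M)" using assms fN_int by simp
  then show ?thesis by (simp add: cong_int_iff)
qed

lemma orb_periodic1:
  assumes a: "a \<ge> 1" and e: "orb f a (i + l) mod M = orb f a i mod M"
  shows "m \<ge> i \<Longrightarrow> orb f a (m + l) mod M = orb f a m mod M"
proof (induction m rule: dec_induct)
  case base then show ?case using e by simp
next
  case (step m)
  have "[fN f (orb f a (m + l)) = fN f (orb f a m)] (mod M)"
    using step.IH orb_ge1[OF a] by (intro fN_cong) (auto simp: cong_def)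
  then show ?case by (simp add: orb_Suc cong_def)
qed

lemma orb_periodic2:
  assumes a: "a \<ge> 1" and e: "orb f a (i + l) mod M = orb f a i mod M" and m: "m \<ge> i"
  shows "orb f a (m + k * l) mod M = orb f a m mod M"
proof (induction k)
  case (Suc k)
  have "orb f a (m + Suc k * l) = orb f a ((m + k * l) + l)" by (simp add: algebra_simps)
  also have "\<dots> mod M = orb f a (m + k * l) mod M"
    using orb_periodic1[OF a e, of "m + k*l"] m by simp
  finally show ?case using Suc by simp
qed simp

lemma orb_periodic3:
  assumes a: "a \<ge> 1" and e: "orb f a (i + l) mod M = orb f a i mod M"
    and m: "m \<ge> i" and m': "m' \<ge> i" and md: "m mod l = m' mod l"
  shows "orb f a m mod M = orb f a m' mod M"
proof -
  have *: "orb f a m mod M = orb f a m' mod M" if "m \<le> m'" "m \<ge> i" "m mod l = m' mod l" for m m'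
  proof -
    have "l dvd m' - m" using that mod_eq_dvd_iff_nat[of m m' l] by simp
    then obtain k where "m' - m = l * k" by (auto elim: dvdE)
    then have "m' = m + k * l" using that by (simp add: algebra_simps)
    then show ?thesis using orb_periodic2[OF a e that(2), of k] by simp
  qed
  show ?thesis
  proof (cases "m \<le> m'")
    case True then show ?thesis using * m md by blast
  next
    case False then show ?thesis using *[of m' m] m' md by simp
  qed
qed

end


lemma fc_facts:
  assumes fc: "is_full_cycle g S" and fin: "finite S" and x: "x \<in> S"
  shows "(g ^^ card S) x = x" and "\<And>i j. (g ^^ i) x = (g ^^ j) x \<Longrightarrow> i mod card S = j mod card S"
proof -
  have bij: "bij_betw g S S" and orbit: "{(g ^^ n) x | n. True} = S"
    using fc x unfolding is_full_cycle_def by auto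
  have gS: "g y \<in> S" if "y \<in> S" for y using bij that by (auto simp: bij_betw_def)
  have gnS: "(g ^^ k) y \<in> S" if "y \<in> S" for y k
    using that by (induction k) (auto simp: gS)
  have injg: "inj_on g S" using bij by (auto simp: bij_betw_def)
  have cancel: "y = z" if "y \<in> S" "z \<in> S" "(g ^^ k) y = (g ^^ k) z" for y z k
    using that
  proof (induction k)
    case (Suc k)
    then have "g ((g ^^ k) y) = g ((g ^^ k) z)" by simp
    then have "(g ^^ k) y = (g ^^ k) z" using injg gnS Suc.prems by (auto dest: inj_onD)
    then show ?case using Suc by blast
  qed simp
  have A: "card S \<le> d" if "d > 0" "(g ^^ d) x = x" for d
  proof -
    have "S \<subseteq> (\<lambda>n. (g ^^ n) x) ` {0..<d}"
    proof
      fix z assume "z \<in> S"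
      then obtain n where "z = (g ^^ n) x" using orbit by blast
      then have "z = (g ^^ (n mod d)) x" using funpow_mod_eq[where f=g and n=d and x=x and m=n] that by simp
      then show "z \<in> (\<lambda>n. (g ^^ n) x) ` {0..<d}" using that(1) by auto
    qed
    then have "card S \<le> card ((\<lambda>n. (g ^^ n) x) ` {0..<d})" by (intro card_mono) auto
    also have "\<dots> \<le> d" using card_image_le[of "{0..<d}"] by simp
    finally show ?thesis .
  qed
  have B: "card S \<le> j - i" if "i < j" "(g ^^ i) x = (g ^^ j) x" for i j
  proof -
    have "(g ^^ j) x = (g ^^ i) ((g ^^ (j - i)) x)"
      using that(1) by (metis funpow_add o_apply le_add_diff_inverse less_imp_le_nat)
    then have "(g ^^ i) ((g ^^ (j - i)) x) = (g ^^ i) x" using that by simp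
    then have "(g ^^ (j - i)) x = x" using cancel gnS x by blast
    then show ?thesis using A that(1) by simp
  qed
  have "\<not> inj_on (\<lambda>n. (g ^^ n) x) {0..card S}"
  proof
    assume inj: "inj_on (\<lambda>n. (g ^^ n) x) {0..card S}"
    have "card ((\<lambda>n. (g ^^ n) x) ` {0..card S}) = Suc (card S)"
      using card_image[OF inj] by simp
    moreover have "(\<lambda>n. (g ^^ n) x) ` {0..card S} \<subseteq> S" using gnS x by auto
    then have "card ((\<lambda>n. (g ^^ n) x) ` {0..card S}) \<le> card S" using fin by (intro card_mono)
    ultimately show False by simp
  qed
  then obtain i j where ij: "i \<le> card S" "j \<le> card S" "i \<noteq> j" "(g ^^ i) x = (g ^^ j) x"
    unfolding inj_on_def by auto
  show C: "(g ^^ card S) x = x"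
  proof (cases "i < j")
    case True
    then have "card S \<le> j - i" using B ij by blast
    then have "i = 0" "j = card S" using ij by auto
    then show ?thesis using ij by simp
  next
    case False
    then have "j < i" using ij by simp
    then have "card S \<le> i - j" using B ij by metis
    then have "j = 0" "i = card S" using ij by auto
    then show ?thesis using ij by simp
  qed
  show "i mod card S = j mod card S" if "(g ^^ i) x = (g ^^ j) x" for i j
  proof (rule ccontr)
    assume ne: "i mod card S \<noteq> j mod card S"
    have pos: "card S > 0" using fin x by (auto simp: card_gt_0_iff)
    have e: "(g ^^ (i mod card S)) x = (g ^^ (j mod card S)) x"
      using that funpow_mod_eq[OF C, of i] funpow_mod_eq[OF C, of j] by simp
    have lt: "i mod card S < card S" "j mod card S < card S" using pos by auto
    show False
    proof (cases "i mod card S < j mod card S")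
      case True
      then show False using B[OF True e] lt by linarith
    next
      case False
      then have jl: "j mod card S < i mod card S" using ne by simp
      show False using B[OF jl e[symmetric]] lt by linarith
    qed
  qed
qed


context
  fixes f :: "int poly"
  assumes pos: "\<And>n::nat. n \<ge> 1 \<Longrightarrow> poly f (int n) \<ge> 1"
begin

lemma orbit_full_cycle:
  assumes a: "a \<ge> 1" and M: "M \<ge> 2"
  and img: "(\<lambda>m. orb f a m mod M) ` {0..<M} = {0..<M}"
  and per: "orb f a (0 + M) mod M = orb f a 0 mod M"
  shows "\<exists>q. prime q \<and> is_full_cycle (red_map f q) {0..<int q}"
proof -
  obtain q :: nat where q: "prime q" "q dvd M" using prime_factor_nat[of M] M by auto
  have q0: "q > 0" "q \<ge> 2" using prime_gt_1_nat[OF q(1)] by auto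
  have qM: "q \<le> M" using q M by (auto intro: dvd_imp_le)
  define d where "d m = int (orb f a m) mod int q" for m
  define S where "S = {0..<int q}"
  define g where "g = red_map f q"
  have dS: "d m \<in> S" for m using q0 by (simp add: d_def S_def)
  have dSuc: "d (Suc m) = g (d m)" for m
  proof -
    have "[int (orb f a m) mod int q = int (orb f a m)] (mod int q)" by (simp add: cong_def)
    then have "[poly f (int (orb f a m) mod int q) = poly f (int (orb f a m))] (mod int q)"
      by (rule poly_cong_int)
    moreover have "poly f (int (orb f a m)) = int (orb f a (Suc m))"
      using fN_int[OF pos orb_ge1[OF pos a]] by (simp add: orb_Suc)
    ultimately show ?thesis by (simp add: d_def g_def red_map_def cong_def)
  qed
  have dper: "d (m + k * M) = d m" for m k
  proof -
    have "orb f a (m + k * M) mod M = orb f a m mod M"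
      using orb_periodic2[OF pos a per, of m k] by simp
    then have "[orb f a (m + k * M) = orb f a m] (mod q)"
      using q(2) by (metis cong_def cong_dvd_modulus_nat)
    then show ?thesis by (simp add: d_def cong_int_iff[symmetric] cong_def)
  qed
  have dcover: "\<exists>m<M. d m = z" if "z \<in> S" for z
  proof -
    have "nat z \<in> {0..<M}" using that qM by (auto simp: S_def)
    then obtain m where m: "m < M" "nat z = orb f a m mod M" using img by force
    have "d m = int (orb f a m mod M mod q)" by (simp add: d_def of_nat_mod mod_mod_cancel q(2))
    also have "\<dots> = z" using that m by (auto simp: S_def)
    finally show ?thesis using m by blast
  qed
  have iter: "(g ^^ n) (d m) = d (m + n)" for n m
    by (induction n) (auto simp: dSuc)
  have gS: "g ` S \<subseteq> S" using q0 by (auto simp: g_def red_map_def S_def)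
  have Sg: "S \<subseteq> g ` S"
  proof
    fix z assume "z \<in> S"
    then obtain m where m: "d m = z" using dcover by blast
    have "z = d (m + 1 * M)" using dper m by metis
    also have "\<dots> = d (Suc (m + M - 1))" using M by (simp add: Suc_diff_le)
    also have "\<dots> = g (d (m + M - 1))" by (rule dSuc)
    finally show "z \<in> g ` S" using dS by blast
  qed
  have bij: "bij_betw g S S"
    using gS Sg finite_surj_inj[of S g] by (auto simp: bij_betw_def S_def)
  have orbit: "{(g ^^ n) x | n. True} = S" if xS: "x \<in> S" for x
  proof
    obtain m where m: "d m = x" using dcover xS by blast
    show "{(g ^^ n) x | n. True} \<subseteq> S" using iter dS m by auto
    show "S \<subseteq> {(g ^^ n) x | n. True}"
    proof
      fix z assume "z \<in> S"
      then obtain m' where m': "d m' = z" using dcover by blast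
      have le: "m \<le> m' + m * M" using M by (simp add: trans_le_add2)
      have "z = d (m' + m * M)" using dper m' by simp
      also have "\<dots> = (g ^^ (m' + m * M - m)) x" using iter[of "m' + m * M - m" m] m le by simp
      finally show "z \<in> {(g ^^ n) x | n. True}" by blast
    qed
  qed
  have "is_full_cycle g S" using bij orbit by (simp add: is_full_cycle_def)
  then show ?thesis using q unfolding g_def S_def by blast
qed

end


lemma main_claim:
  fixes f :: "int poly"
  assumes pos: "\<And>n::nat. n \<ge> 1 \<Longrightarrow> poly f (int n) \<ge> 1"
  and nc: "\<forall>p::nat. prime p \<longrightarrow> \<not> is_full_cycle (red_map f p) {0..<int p}"
  and a: "a \<ge> 1"
  shows "M \<ge> 1 \<Longrightarrow> \<exists>r. \<forall>b. filterlim (\<lambda>n. real (up2 f a b n)) at_top sequentially \<longrightarrow>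
           eventually (\<lambda>n. up2 f a b n mod M = r) sequentially"
proof (induction M rule: less_induct)
  case (less M)
  show ?case
  proof (cases "M = 1")
    case True then show ?thesis by (intro exI[of _ 0]) simp
  next
    case False
    then have M2: "M \<ge> 2" using less.prems by simp
    have step: "?thesis" if l1: "l \<ge> 1" and lM: "l < M"
      and e: "orb f a (i + l) mod M = orb f a i mod M" for i l
    proof -
      obtain r where r: "\<And>b. filterlim (\<lambda>n. real (up2 f a b n)) at_top sequentially \<Longrightarrow>
           eventually (\<lambda>n. up2 f a b n mod l = r) sequentially"
        using less.IH[OF lM l1] by blast
      define s where "s = i * l + r mod l"
      have "i * 1 \<le> i * l" using l1 by (intro mult_le_mono2)
      then have si: "s \<ge> i" unfolding s_def by linarith
      have smod: "s mod l = r mod l" by (simp add: s_def)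
      show ?thesis
      proof (intro exI allI impI)
        fix b assume lim: "filterlim (\<lambda>n. real (up2 f a b n)) at_top sequentially"
        have ev1: "eventually (\<lambda>n. up2 f a b n mod l = r) sequentially" using r[OF lim] .
        have ev2: "eventually (\<lambda>n. real i \<le> real (up2 f a b n)) sequentially"
          using lim unfolding filterlim_at_top by blast
        have "eventually (\<lambda>n. up2 f a b (Suc n) mod M = orb f a s mod M) sequentially"
          using ev1 ev2
        proof eventually_elim
          case (elim n)
          have "up2 f a b n mod l = s mod l" using elim(1) smod by (metis mod_mod_trivial)
          then have "orb f a (up2 f a b n) mod M = orb f a s mod M"
            using orb_periodic3[OF pos a e, of "up2 f a b n" s] elim(2) si by simp
          then show ?case by (simp add: up2_Suc)
        qed
        then show "eventually (\<lambda>n. up2 f a b n mod M = orb f a s mod M) sequentially"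
          using eventually_sequentially_Suc[of "\<lambda>n. up2 f a b n mod M = orb f a s mod M"] by blast
      qed
    qed
    show ?thesis
    proof (cases "inj_on (\<lambda>m. orb f a m mod M) {0..<M}")
      case False
      then obtain i j where ij: "i < M" "j < M" "i \<noteq> j" "orb f a i mod M = orb f a j mod M"
        unfolding inj_on_def by auto
      show ?thesis
      proof (cases "i < j")
        case True
        then show ?thesis using step[of "j - i" i] ij by simp
      next
        case False
        then show ?thesis using step[of "i - j" j] ij by simp
      qed
    next
      case True
      have sub: "(\<lambda>m. orb f a m mod M) ` {0..<M} \<subseteq> {0..<M}" using M2 by auto
      have "card ((\<lambda>m. orb f a m mod M) ` {0..<M}) = card {0..<M}"
        using card_image[OF True] by simp
      then have img: "(\<lambda>m. orb f a m mod M) ` {0..<M} = {0..<M}"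
        using sub by (intro card_subset_eq) auto
      have "orb f a M mod M \<in> {0..<M}" using M2 by simp
      then obtain i where i: "i < M" "orb f a M mod M = orb f a i mod M"
        using img by (metis (no_types, lifting) atLeastLessThan_iff imageE)
      show ?thesis
      proof (cases "i = 0")
        case True
        then have "orb f a (0 + M) mod M = orb f a 0 mod M" using i by simp
        then have "\<exists>q. prime q \<and> is_full_cycle (red_map f q) {0..<int q}"
          using orbit_full_cycle[OF pos a M2 img] by blast
        then show ?thesis using nc by blast
      next
        case False
        then show ?thesis using step[of "M - i" i] i by simp
      qed
    qed
  qed
qed


lemma poly_eventually_ge1:
  fixes g :: "int poly"
  shows "lead_coeff g > 0 \<Longrightarrow> \<exists>B. \<forall>x\<ge>B. poly g x \<ge> 1"
proof (induction g)
  case 0 then show ?case by simp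
next
  case (pCons c h)
  show ?case
  proof (cases "h = 0")
    case True
    then show ?thesis using pCons.prems by auto
  next
    case False
    then have "lead_coeff h > 0" using pCons.prems by (simp add: lead_coeff_pCons(1))
    then obtain B where B: "\<And>x. x \<ge> B \<Longrightarrow> poly h x \<ge> 1" using pCons.IH by blast
    show ?thesis
    proof (intro exI allI impI)
      fix x :: int assume x: "x \<ge> max B (max 0 (1 - c))"
      have "x * 1 \<le> x * poly h x" using x B[of x] by (intro mult_left_mono) auto
      then show "poly (pCons c h) x \<ge> 1" using x by simp
    qed
  qed
qed

lemma grow:
  fixes f :: "int poly"
  assumes pos: "\<And>n::nat. n \<ge> 1 \<Longrightarrow> poly f (int n) \<ge> 1"
  and p: "prime p" and fc: "is_full_cycle (red_map f p) {0..<int p}"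
  shows "\<exists>a::nat. a \<ge> 1 \<and> (\<forall>x\<ge>a. fN f x \<ge> x + 1)"
proof -
  have p2: "p \<ge> 2" using prime_gt_1_nat[OF p] by simp
  have f0: "f \<noteq> 0" using pos[of 1] by auto
  have lcpos: "lead_coeff f > 0"
  proof (rule ccontr)
    assume "\<not> lead_coeff f > 0"
    moreover have "lead_coeff f \<noteq> 0" using f0 by simp
    ultimately have "lead_coeff f < 0" by linarith
    then have "lead_coeff (-f) > 0" by simp
    then obtain B where B: "\<And>x. x \<ge> B \<Longrightarrow> poly (-f) x \<ge> 1"
      using poly_eventually_ge1 by blast
    have "poly (-f) (int (nat (max B 1))) \<ge> 1" using B by simp
    moreover have "poly f (int (nat (max B 1))) \<ge> 1" using pos[of "nat (max B 1)"] by simp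
    ultimately show False by simp
  qed
  have suff: "\<exists>a::nat. a \<ge> 1 \<and> (\<forall>x\<ge>a. fN f x \<ge> x + 1)"
    if h: "\<exists>a::nat. a \<ge> 1 \<and> (\<forall>x\<ge>a. poly f (int x) \<ge> int x + 1)"
  proof -
    obtain a :: nat where a: "a \<ge> 1" "\<And>x. x \<ge> a \<Longrightarrow> poly f (int x) \<ge> int x + 1" using h by blast
    have "fN f x \<ge> x + 1" if "x \<ge> a" for x
      using a(2)[OF that] fN_int[OF pos, of x] a(1) that by simp
    then show ?thesis using a(1) by blast
  qed
  show ?thesis
  proof (cases "degree f \<ge> 2")
    case True
    define g where "g = - [:0, 1:] + f"
    have "degree (- [:0, 1::int:]) < degree f" using True by simp
    then have "lead_coeff g = lead_coeff f" unfolding g_def by (rule lead_coeff_add_le)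
    then obtain B where B: "\<And>x. x \<ge> B \<Longrightarrow> poly g x \<ge> 1"
      using poly_eventually_ge1 lcpos by metis
    show ?thesis
    proof (rule suff, intro exI conjI allI impI)
      show "nat (max B 1) \<ge> 1" by simp
      fix x :: nat assume "nat (max B 1) \<le> x"
      then have "int x \<ge> B" by simp
      then show "poly f (int x) \<ge> int x + 1" using B[of "int x"] by (simp add: g_def)
    qed
  next
    case False
    define d where "d = Polynomial.coeff f 0"
    define c where "c = Polynomial.coeff f 1"
    have fdc: "f = [:d, c:]"
    proof (rule poly_eqI)
      fix n show "Polynomial.coeff f n = Polynomial.coeff [:d, c:] n"
      proof (cases n)
        case 0 then show ?thesis by (simp add: d_def)
      next
        case (Suc m)
        then show ?thesis
        proof (cases m)
          case 0 then show ?thesis using Suc by (simp add: c_def)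
        next
          case (Suc k)
          then have "degree f < n" using False \<open>n = Suc m\<close> by simp
          then show ?thesis using Suc \<open>n = Suc m\<close> by (simp add: coeff_eq_0)
        qed
      qed
    qed
    have pf: "poly f x = d + x * c" for x by (subst fdc) simp
    have c0: "c \<ge> 0"
    proof (cases "degree f = 1")
      case True then show ?thesis using lcpos by (simp add: c_def)
    next
      case False
      then have "degree f < 1" using \<open>\<not> degree f \<ge> 2\<close> by simp
      then show ?thesis by (simp add: c_def coeff_eq_0)
    qed
    have bij: "bij_betw (red_map f p) {0..<int p} {0..<int p}"
      and orbit: "\<And>x. x \<in> {0..<int p} \<Longrightarrow> {(red_map f p ^^ n) x | n. True} = {0..<int p}"
      using fc unfolding is_full_cycle_def by auto
    consider "c = 0" | "c = 1" | "c \<ge> 2" using c0 by linarith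
    then show ?thesis
    proof cases
      case 1
      have "red_map f p 0 = red_map f p 1" by (simp add: red_map_def pf 1)
      moreover have "inj_on (red_map f p) {0..<int p}" using bij by (simp add: bij_betw_def)
      ultimately have "(0::int) = 1" using p2 by (auto dest: inj_onD)
      then show ?thesis by simp
    next
      case 2
      have "d \<ge> 0" using pos[of 1] by (simp add: pf 2)
      moreover have "d \<noteq> 0"
      proof
        assume d0: "d = 0"
        have "(red_map f p ^^ n) 0 = 0" for n
          by (induction n) (simp_all add: red_map_def pf d0 2)
        then have "{(red_map f p ^^ n) 0 | n. True} = {0}" by auto
        moreover have "{(red_map f p ^^ n) 0 | n. True} = {0..<int p}" using orbit p2 by simp
        moreover have "(1::int) \<in> {0..<int p}" using p2 by simp
        ultimately have "(1::int) \<in> {0}" by blast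
        then show False by simp
      qed
      ultimately have "d \<ge> 1" by simp
      then show ?thesis by (intro suff exI[of _ 1]) (simp add: pf 2)
    next
      case 3
      show ?thesis
      proof (rule suff, intro exI conjI allI impI)
        show "nat (max 1 (1 - d)) \<ge> 1" by simp
        fix x :: nat assume x: "nat (max 1 (1 - d)) \<le> x"
        have "int x * 2 \<le> int x * c" using 3 by (intro mult_left_mono) auto
        then show "poly f (int x) \<ge> int x + 1" using x by (simp add: pf)
      qed
    qed
  qed
qed


lemma reverse:
  fixes f :: "int poly"
  assumes pos: "\<And>n::nat. n \<ge> 1 \<Longrightarrow> poly f (int n) \<ge> 1"
  and p: "prime p" and fc: "is_full_cycle (red_map f p) {0..<int p}"
  shows "\<exists>a::nat. a \<ge> 1 \<and> (\<forall>L. \<exists>b::nat. b \<ge> 1 \<and>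
     filterlim (\<lambda>n. real (up2 f a b n)) at_top sequentially \<and>
     \<not> padic_tendsto p (\<lambda>n. int (up2 f a b n)) L)"
proof -
  have p2: "p \<ge> 2" using prime_gt_1_nat[OF p] by simp
  obtain a :: nat where a: "a \<ge> 1" "\<And>x. x \<ge> a \<Longrightarrow> fN f x \<ge> x + 1"
    using grow[OF pos p fc] by blast
  have orbge: "orb f a m \<ge> a + m" for m
  proof (induction m)
    case (Suc m)
    then show ?case using a(2)[of "orb f a m"] by (simp add: orb_Suc)
  qed simp
  have yge: "up2 f a b n \<ge> n" for b n
  proof (induction n)
    case (Suc n)
    then show ?case using orbge[of "up2 f a b n"] a(1) by (simp add: up2_Suc)
  qed simp
  have lim: "filterlim (\<lambda>n. real (up2 f a b n)) at_top sequentially" for b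
    by (rule filterlim_at_top_mono[OF filterlim_real_sequentially]) (use yge in simp)
  define S where "S = {0..<int p}"
  define g where "g = red_map f p"
  define c where "c m = int (orb f a m) mod int p" for m
  have fcS: "is_full_cycle g S" using fc by (simp add: g_def S_def)
  have finS: "finite S" by (simp add: S_def)
  have cardS: "card S = p" by (simp add: S_def)
  have c0S: "c 0 \<in> S" using p2 by (simp add: c_def S_def)
  have cSuc: "c (Suc m) = g (c m)" for m
  proof -
    have "[int (orb f a m) mod int p = int (orb f a m)] (mod int p)" by (simp add: cong_def)
    then have "[poly f (int (orb f a m) mod int p) = poly f (int (orb f a m))] (mod int p)"
      by (rule poly_cong_int)
    moreover have "poly f (int (orb f a m)) = int (orb f a (Suc m))"
      using fN_int[OF pos orb_ge1[OF pos a(1)]] by (simp add: orb_Suc)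
    ultimately show ?thesis by (simp add: c_def g_def red_map_def cong_def)
  qed
  have cg: "c m = (g ^^ m) (c 0)" for m
    by (induction m) (simp_all add: cSuc)
  have ceq1: "m mod p = m' mod p" if cm: "c m = c m'" for m m'
  proof -
    have "(g ^^ m) (c 0) = (g ^^ m') (c 0)" using cm cg[of m] cg[of m'] by simp
    then show ?thesis using fc_facts(2)[OF fcS finS c0S, of m m'] cardS by simp
  qed
  have ceq2: "c m = c m'" if mm: "m mod p = m' mod p" for m m'
  proof -
    have e1: "(g ^^ (m mod p)) (c 0) = (g ^^ m) (c 0)"
      using funpow_mod_eq[OF fc_facts(1)[OF fcS finS c0S], of m] cardS by simp
    have e2: "(g ^^ (m' mod p)) (c 0) = (g ^^ m') (c 0)"
      using funpow_mod_eq[OF fc_facts(1)[OF fcS finS c0S], of m'] cardS by simp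
    show ?thesis using e1 e2 mm cg[of m] cg[of m'] by simp
  qed
  have yrel: "int (up2 f a b (Suc n)) mod int p = c (up2 f a b n)" for b n
    by (simp add: up2_Suc c_def)
  show ?thesis
  proof (rule exI[of _ a], intro conjI allI a(1))
    fix L :: "nat \<Rightarrow> int"
    define r0 where "r0 = nat (L 1 mod int p)"
    have r0p: "r0 < p" using p2 by (simp add: r0_def nat_less_iff)
    have r0L: "int r0 = L 1 mod int p" using p2 by (simp add: r0_def)
    have ev: "\<exists>N. \<forall>n\<ge>N. up2 f a b n mod p = r0" if t: "padic_tendsto p (\<lambda>n. int (up2 f a b n)) L" for b
    proof -
      obtain N where N: "\<And>n. n \<ge> N \<Longrightarrow> [int (up2 f a b n) = L 1] (mod int p ^ 1)"
        using t unfolding padic_tendsto_def by blast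
      have "up2 f a b n mod p = r0" if "n \<ge> N" for n
        using N[OF that] r0L by (intro imod) (simp add: cong_def)
      then show ?thesis by blast
    qed
    show "\<exists>b::nat. b \<ge> 1 \<and> filterlim (\<lambda>n. real (up2 f a b n)) at_top sequentially \<and>
       \<not> padic_tendsto p (\<lambda>n. int (up2 f a b n)) L"
    proof (cases "c r0 = int r0")
      case False
      show ?thesis
      proof (intro exI[of _ 1] conjI notI)
        show "(1::nat) \<ge> 1" by simp
        show "filterlim (\<lambda>n. real (up2 f a 1 n)) at_top sequentially" by (rule lim)
        assume "padic_tendsto p (\<lambda>n. int (up2 f a 1 n)) L"
        then obtain N where N: "\<And>n. n \<ge> N \<Longrightarrow> up2 f a 1 n mod p = r0" using ev by blast
        have "c (up2 f a 1 N) = int (up2 f a 1 (Suc N)) mod int p" by (simp add: yrel)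
        also have "\<dots> = int r0" using N[of "Suc N"] by (intro imod2) simp
        finally have "c (up2 f a 1 N) = int r0" .
        moreover have "c (up2 f a 1 N) = c r0" using N[of N] r0p by (intro ceq2) simp
        ultimately show False using False by simp
      qed
    next
      case True
      define b where "b = p + (r0 + 1) mod p"
      have never: "up2 f a b n mod p \<noteq> r0" for n
      proof (induction n)
        case 0
        have "b mod p = (r0 + 1) mod p" by (simp add: b_def)
        moreover have "(r0 + 1) mod p \<noteq> r0"
        proof (cases "r0 + 1 < p")
          case True then show ?thesis by simp
        next
          case False
          then have "r0 + 1 = p" using r0p by simp
          then show ?thesis using p2 by auto
        qed
        ultimately show ?case by (simp add: up2_0)
      next
        case (Suc n)
        show ?case
        proof
          assume h: "up2 f a b (Suc n) mod p = r0"
          have "c (up2 f a b n) = int (up2 f a b (Suc n)) mod int p" by (simp add: yrel)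
          also have "\<dots> = int r0" using h by (rule imod2)
          also have "\<dots> = c r0" using True by simp
          finally have "up2 f a b n mod p = r0 mod p" by (rule ceq1)
          then show False using Suc.IH r0p by simp
        qed
      qed
      show ?thesis
      proof (intro exI[of _ b] conjI notI)
        show "b \<ge> 1" using p2 by (simp add: b_def)
        show "filterlim (\<lambda>n. real (up2 f a b n)) at_top sequentially" by (rule lim)
        assume "padic_tendsto p (\<lambda>n. int (up2 f a b n)) L"
        then obtain N where "\<And>n. n \<ge> N \<Longrightarrow> up2 f a b n mod p = r0" using ev by blast
        then show False using never[of N] by simp
      qed
    qed
  qed
qed


theorem theorem1p3:
  fixes f :: "int poly"
  assumes fN_pos: "\<And>n::nat. n \<ge> 1 \<Longrightarrow> poly f (int n) \<ge> 1"
  shows "(\<forall>p::nat. prime p \<longrightarrow> \<not> is_full_cycle (red_map f p) {0..<int p})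
     \<longleftrightarrow>
     (\<forall>a::nat. a \<ge> 1 \<longrightarrow> (\<forall>p::nat. prime p \<longrightarrow>
        (\<exists>L. \<forall>b::nat. b \<ge> 1 \<longrightarrow>
           filterlim (\<lambda>n. real (up2 f a b n)) at_top sequentially \<longrightarrow>
           padic_tendsto p (\<lambda>n. int (up2 f a b n)) L)))"
proof
  assume nc: "\<forall>p::nat. prime p \<longrightarrow> \<not> is_full_cycle (red_map f p) {0..<int p}"
  show "\<forall>a::nat. a \<ge> 1 \<longrightarrow> (\<forall>p::nat. prime p \<longrightarrow>
        (\<exists>L. \<forall>b::nat. b \<ge> 1 \<longrightarrow>
           filterlim (\<lambda>n. real (up2 f a b n)) at_top sequentially \<longrightarrow>
           padic_tendsto p (\<lambda>n. int (up2 f a b n)) L))"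
  proof (intro allI impI)
    fix a p :: nat
    assume a: "a \<ge> 1" and p: "prime p"
    have p0: "p > 0" using prime_gt_0_nat[OF p] .
    have "\<forall>k. \<exists>r. \<forall>b. filterlim (\<lambda>n. real (up2 f a b n)) at_top sequentially \<longrightarrow>
           eventually (\<lambda>n. up2 f a b n mod p ^ k = r) sequentially"
    proof
      fix k
      have "p ^ k \<ge> 1" using p0 by simp
      then show "\<exists>r. \<forall>b. filterlim (\<lambda>n. real (up2 f a b n)) at_top sequentially \<longrightarrow>
           eventually (\<lambda>n. up2 f a b n mod p ^ k = r) sequentially"
        using main_claim[OF fN_pos nc a, where M = "p ^ k"] by blast
    qed
    then obtain R where R: "\<And>k b. filterlim (\<lambda>n. real (up2 f a b n)) at_top sequentially \<Longrightarrow>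
           eventually (\<lambda>n. up2 f a b n mod p ^ k = R k) sequentially"
      by metis
    show "\<exists>L. \<forall>b::nat. b \<ge> 1 \<longrightarrow>
           filterlim (\<lambda>n. real (up2 f a b n)) at_top sequentially \<longrightarrow>
           padic_tendsto p (\<lambda>n. int (up2 f a b n)) L"
    proof (cases "\<exists>b0::nat. b0 \<ge> 1 \<and> filterlim (\<lambda>n. real (up2 f a b0 n)) at_top sequentially")
      case True
      then obtain b0 where b0: "filterlim (\<lambda>n. real (up2 f a b0 n)) at_top sequentially" by blast
      define L where "L k = int (R k mod p ^ k)" for k
      have Rlt: "R k < p ^ k" for k
      proof -
        obtain n where "up2 f a b0 n mod p ^ k = R k" using eventually_happens'[OF _ R[OF b0, of k]] by auto
        then show ?thesis using p0 by (metis mod_less_divisor zero_less_power)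
      qed
      have Lpad: "L \<in> padic_ints p"
        unfolding padic_ints_def
      proof (intro CollectI allI conjI)
        fix k
        show "0 \<le> L k" by (simp add: L_def)
        show "L k < int p ^ k" using Rlt[of k] by (simp add: L_def)
        have "eventually (\<lambda>n. up2 f a b0 n mod p ^ Suc k = R (Suc k) \<and> up2 f a b0 n mod p ^ k = R k) sequentially"
          using R[OF b0, of "Suc k"] R[OF b0, of k] by (rule eventually_conj)
        then obtain n where n: "up2 f a b0 n mod p ^ Suc k = R (Suc k)" "up2 f a b0 n mod p ^ k = R k"
          using eventually_happens'[OF sequentially_bot] by blast
        have dv: "p ^ k dvd p ^ Suc k" by (simp add: le_imp_power_dvd)
        have "R (Suc k) mod p ^ k = R k"
          using n mod_mod_cancel[OF dv, of "up2 f a b0 n"] by simp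
        then have "int (R (Suc k)) mod int (p ^ k) = int (R k)" by (rule imod2)
        then show "L (Suc k) mod int p ^ k = L k"
          using Rlt[of "Suc k"] Rlt[of k] by (simp add: L_def)
      qed
      show ?thesis
      proof (intro exI[of _ L] allI impI)
        fix b :: nat
        assume lim: "filterlim (\<lambda>n. real (up2 f a b n)) at_top sequentially"
        show "padic_tendsto p (\<lambda>n. int (up2 f a b n)) L"
          unfolding padic_tendsto_def
        proof (intro conjI allI Lpad)
          fix k
          obtain N where N: "\<And>n. n \<ge> N \<Longrightarrow> up2 f a b n mod p ^ k = R k"
            using R[OF lim, of k] unfolding eventually_sequentially by blast
          have "[int (up2 f a b n) = L k] (mod int p ^ k)" if "n \<ge> N" for n
          proof -
            have "int (up2 f a b n) mod int (p ^ k) = int (R k)" using N[OF that] by (rule imod2)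
            moreover have "L k mod int (p ^ k) = int (R k)"
              using Rlt[of k] by (simp add: L_def imod2)
            ultimately show ?thesis by (simp add: cong_def)
          qed
          then show "\<exists>N. \<forall>n\<ge>N. [int (up2 f a b n) = L k] (mod int p ^ k)" by blast
        qed
      qed
    next
      case False
      show ?thesis
      proof (intro exI[of _ "\<lambda>k. 0"] allI impI)
        fix b :: nat
        assume "b \<ge> 1" "filterlim (\<lambda>n. real (up2 f a b n)) at_top sequentially"
        then show "padic_tendsto p (\<lambda>n. int (up2 f a b n)) (\<lambda>k. 0)" using False by blast
      qed
    qed
  qed
next
  assume ii: "\<forall>a::nat. a \<ge> 1 \<longrightarrow> (\<forall>p::nat. prime p \<longrightarrow>
        (\<exists>L. \<forall>b::nat. b \<ge> 1 \<longrightarrow>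
           filterlim (\<lambda>n. real (up2 f a b n)) at_top sequentially \<longrightarrow>
           padic_tendsto p (\<lambda>n. int (up2 f a b n)) L))"
  show "\<forall>p::nat. prime p \<longrightarrow> \<not> is_full_cycle (red_map f p) {0..<int p}"
  proof (intro allI impI notI)
    fix p :: nat
    assume p: "prime p" and fc: "is_full_cycle (red_map f p) {0..<int p}"
    obtain a where a: "a \<ge> 1" and bad: "\<And>L. \<exists>b::nat. b \<ge> 1 \<and>
       filterlim (\<lambda>n. real (up2 f a b n)) at_top sequentially \<and>
       \<not> padic_tendsto p (\<lambda>n. int (up2 f a b n)) L"
      using reverse[OF fN_pos p fc] by blast
    obtain L where L: "\<And>b::nat. b \<ge> 1 \<Longrightarrow>
           filterlim (\<lambda>n. real (up2 f a b n)) at_top sequentially \<Longrightarrow>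
           padic_tendsto p (\<lambda>n. int (up2 f a b n)) L"
      using ii a p by blast
    show False using bad[of L] L by blast
  qed
qed

end
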